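(* In the Classified Reallocation algorithm (with power-of-two laxities), suppose a client $c_i$ is reallocated to the big channel during the processing of a departure (because it lies in a $w$-channel with $w>2\tau$ after $\tau$ is updated). Let $n$ be the number of active clients at the time of this reallocation and $n'$ the number of active clients at the time of the last allocation of $c_i$. Then $n\le n'/2$.
   Context: Model: discrete time; each client $c_i$ has arrival time, departure time and laxity $w_i$ (a power of $2$), and must transmit at least once in every $w_i$ consecutive time steps while active; one transmission per channel per time step. A reallocation is a change of the channel of a client. For $x>0$, $\lceil\lceil x\rceil\rceil$ denotes the smallest power of $2$ not smaller than $x$. Classified Reallocation algorithm. Channels: one \emph{big channel} (all its clients transmit with period $\tau/2$) and \emph{$w$-channels} for powers of two $w$ (clients transmit with period $w$; at most $w$ clients; \emph{full} when holding $w$). State: $n$ (active clients, initially $0$), threshold $\tau$ (initially $2$). Arrival of $c_i$: $n\leftarrow n+1$. If $2\lceil\lceil n\rceil\rceil>\tau$: $\tau\leftarrow 2\lceil\lceil n\rceil\rceil$; each big-channel client $c_j$ with $w_j<\tau/2$ is reallocated to the non-full $w_j$-channel of minimum load (a new one reserved if needed); remaining big-channel clients get period $\tau/2$. Then if $w_i\ge\tau$, $c_i$ goes to the big channel; otherwise to the non-full $w_i$-channel of minimum load (new one reserved if needed). Departure of $c_i$ from channel $c$: $n\leftarrow n-1$. If $c$ is not the big channel: release $c$ if empty; otherwise if some $w_i$-channel $c'\ne c$ is not full, move one client from $c'$ to $c$. Then if $2\lceil\lceil n\rceil\rceil<\tau$: $\tau\leftarrow 2\lceil\lceil n\rceil\rceil$,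 big-channel clients get period $\tau/2$, and every $w$-channel with $w>2\tau$ has all its clients reallocated to the big channel and is released. *)

theory Defs
  imports Main
begin

text \<open>Channels: the big channel, or a w-channel identified by its class w and an index k.
  A w-channel exists iff it currently holds at least one active client
  (empty channels are released; reserving a new channel = using an unused index).
  Transmission schedules (periods) do not influence any decision of the
  algorithm and are not modelled.\<close>

datatype chan = Big | WCh nat nat

record cra_state =
  act   :: "nat set"
  seen  :: "nat set"          \<comment> \<open>clients that have already arrived (each client arrives once)\<close>
  loc   :: "nat \<Rightarrow> chan"
  nact  :: nat
  tau   :: nat
  lastn :: "nat \<Rightarrow> nat"      \<comment> \<open>value of n at the last allocation of each client\<close>

text \<open>Smallest power of two not smaller than x (for x = 0 this is 1).\<close>
definition clp2 :: "nat \<Rightarrow> nat" where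
  "clp2 x = (LEAST p. (\<exists>k. p = 2 ^ k) \<and> x \<le> p)"

definition load :: "cra_state \<Rightarrow> chan \<Rightarrow> nat" where
  "load s ch = card {j \<in> act s. loc s j = ch}"

definition existing :: "cra_state \<Rightarrow> chan \<Rightarrow> bool" where
  "existing s ch \<longleftrightarrow> 0 < load s ch"

definition wfull :: "cra_state \<Rightarrow> chan \<Rightarrow> bool" where
  "wfull s ch \<longleftrightarrow> (case ch of Big \<Rightarrow> False | WCh w k \<Rightarrow> w \<le> load s ch)"

definition choice :: "cra_state \<Rightarrow> nat \<Rightarrow> chan \<Rightarrow> bool" where
  "choice s w ch \<longleftrightarrow> (\<exists>k. ch = WCh w k) \<and> \<not> wfull s ch \<and>
     (if (\<exists>k. existing s (WCh w k) \<and> \<not> wfull s (WCh w k))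
      then existing s ch \<and>
           (\<forall>k. existing s (WCh w k) \<and> \<not> wfull s (WCh w k) \<longrightarrow> load s ch \<le> load s (WCh w k))
      else load s ch = 0)"

text \<open>Sequential reallocation of a list of clients (in the given order) from the
  big channel to w-channels; each such reallocation is an allocation.\<close>
inductive realloc :: "(nat \<Rightarrow> nat) \<Rightarrow> nat list \<Rightarrow> cra_state \<Rightarrow> cra_state \<Rightarrow> bool"
  for lax :: "nat \<Rightarrow> nat" where
  realloc_Nil: "realloc lax [] s s"
| realloc_Cons: "choice s (lax j) ch \<Longrightarrow>
     realloc lax js (s\<lparr>loc := (loc s)(j := ch), lastn := (lastn s)(j := nact s)\<rparr>) s' \<Longrightarrow>
     realloc lax (j # js) s s'"

definition arrive :: "(nat \<Rightarrow> nat) \<Rightarrow> nat \<Rightarrow> cra_state \<Rightarrow> cra_state \<Rightarrow> bool" where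
  "arrive lax i s s' \<longleftrightarrow> i \<notin> seen s \<and>
     (let s1 = s\<lparr>seen := insert i (seen s), nact := Suc (nact s)\<rparr>;
          T = 2 * clp2 (nact s1) in
      \<exists>s2. (if tau s1 < T then
              (\<exists>js. distinct js \<and>
                    set js = {j \<in> act s1. loc s1 j = Big \<and> lax j < T div 2} \<and>
                    realloc lax js (s1\<lparr>tau := T\<rparr>) s2)
            else s2 = s1) \<and>
           (\<exists>ch. (if tau s2 \<le> lax i then ch = Big else choice s2 (lax i) ch) \<and>
                 s' = s2\<lparr>act := insert i (act s2), loc := (loc s2)(i := ch),
                         lastn := (lastn s2)(i := nact s2)\<rparr>))"

text \<open>A client in channel ch is sent to the big channel when tau becomes T.\<close>
definition released :: "nat \<Rightarrow> chan \<Rightarrow> bool" where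
  "released T ch \<longleftrightarrow> (case ch of Big \<Rightarrow> False | WCh w k \<Rightarrow> 2 * T < w)"

definition depart :: "(nat \<Rightarrow> nat) \<Rightarrow> nat \<Rightarrow> cra_state \<Rightarrow> cra_state \<Rightarrow> bool" where
  "depart lax i s s' \<longleftrightarrow> i \<in> act s \<and>
     (let c = loc s i;
          s1 = s\<lparr>act := act s - {i}, nact := nact s - 1\<rparr> in
      \<exists>s2. (case c of
              Big \<Rightarrow> s2 = s1
            | WCh w k \<Rightarrow>
               (if load s1 c = 0 then s2 = s1
                else if (\<exists>k'. k' \<noteq> k \<and> existing s1 (WCh w k') \<and> \<not> wfull s1 (WCh w k'))
                then (\<exists>k' j. k' \<noteq> k \<and> existing s1 (WCh w k') \<and> \<not> wfull s1 (WCh w k') \<and>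
                             j \<in> act s1 \<and> loc s1 j = WCh w k' \<and>
                             s2 = s1\<lparr>loc := (loc s1)(j := c)\<rparr>)
                else s2 = s1)) \<and>
           (let T = 2 * clp2 (nact s2) in
            if T < tau s2 then
              s' = s2\<lparr>tau := T,
                      loc := (\<lambda>j. if j \<in> act s2 \<and> released T (loc s2 j) then Big else loc s2 j),
                      lastn := (\<lambda>j. if j \<in> act s2 \<and> released T (loc s2 j) then nact s2 else lastn s2 j)\<rparr>
            else s' = s2))"

definition step :: "(nat \<Rightarrow> nat) \<Rightarrow> cra_state \<Rightarrow> cra_state \<Rightarrow> bool" where
  "step lax s s' \<longleftrightarrow> (\<exists>i. arrive lax i s s' \<or> depart lax i s s')"

definition init :: cra_state where
  "init = \<lparr>act = {}, seen = {}, loc = (\<lambda>_. Big), nact = 0, tau = 2, lastn = (\<lambda>_. 0)\<rparr>"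

end

theory Submission
  imports Defs
begin

lemma clp2_ex: "\<exists>p. (\<exists>k. p = (2::nat) ^ k) \<and> x \<le> p"
  by (rule exI[of _ "2^x"]) (auto intro: less_imp_le[OF less_exp])

lemma clp2_prop: "(\<exists>k. clp2 x = 2 ^ k) \<and> x \<le> clp2 x"
  unfolding clp2_def using LeastI_ex[OF clp2_ex] .

lemma clp2_le: "(\<exists>k. p = 2 ^ k) \<Longrightarrow> x \<le> p \<Longrightarrow> clp2 x \<le> p"
  unfolding clp2_def by (rule Least_le) auto

lemma clp2_mono: "x \<le> y \<Longrightarrow> clp2 x \<le> clp2 y"
  using clp2_prop[of y] by (intro clp2_le) auto

lemma clp2_0: "clp2 0 = 1"
proof -
  have "clp2 0 \<le> 1" by (rule clp2_le) (auto intro: exI[of _ 0])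
  moreover obtain k where "clp2 0 = 2 ^ k" using clp2_prop by blast
  moreover have "(1::nat) \<le> 2 ^ k" by simp
  ultimately show ?thesis by linarith
qed

definition Q :: "cra_state \<Rightarrow> bool" where
  "Q s \<longleftrightarrow> (\<forall>j\<in>act s. \<forall>w k. loc s j = WCh w k \<longrightarrow> w < 2 * clp2 (lastn s j))"

definition inv :: "cra_state \<Rightarrow> bool" where
  "inv s \<longleftrightarrow> tau s \<le> 2 * clp2 (nact s) \<and> Q s"

lemma choice_WCh: "choice s w ch \<Longrightarrow> \<exists>k. ch = WCh w k"
  unfolding choice_def by blast

lemma realloc_pres:
  assumes "realloc lax js s s'"
  shows "(\<forall>j\<in>set js. lax j < 2 * clp2 (nact s)) \<Longrightarrow> Q s \<Longrightarrow>
    Q s' \<and> act s' = act s \<and> nact s' = nact s \<and> tau s' = tau s"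
  using assms
proof (induction rule: realloc.induct)
  case (realloc_Nil s)
  then show ?case by simp
next
  case (realloc_Cons s j ch js s')
  let ?t = "s\<lparr>loc := (loc s)(j := ch), lastn := (lastn s)(j := nact s)\<rparr>"
  obtain k where ch: "ch = WCh (lax j) k" using choice_WCh[OF realloc_Cons.hyps(1)] by blast
  have "Q ?t" using realloc_Cons.prems ch unfolding Q_def by auto
  moreover have "\<forall>j\<in>set js. lax j < 2 * clp2 (nact ?t)" using realloc_Cons.prems by simp
  ultimately show ?case using realloc_Cons.IH by simp
qed

lemma depart_facts:
  assumes "depart lax i s s'"
  shows "\<exists>s2. act s2 = act s - {i} \<and> nact s2 = nact s - 1 \<and> tau s2 = tau s \<and> lastn s2 = lastn s
    \<and> (\<forall>j w k. loc s2 j = WCh w k \<longrightarrow> (\<exists>k'. loc s j = WCh w k'))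
    \<and> (\<forall>j. loc s2 j = Big \<longrightarrow> loc s j = Big)
    \<and> (let T = 2 * clp2 (nact s2) in
            if T < tau s2 then
              s' = s2\<lparr>tau := T,
                      loc := (\<lambda>j. if j \<in> act s2 \<and> released T (loc s2 j) then Big else loc s2 j),
                      lastn := (\<lambda>j. if j \<in> act s2 \<and> released T (loc s2 j) then nact s2 else lastn s2 j)\<rparr>
            else s' = s2)"
proof -
  let ?s1 = "s\<lparr>act := act s - {i}, nact := nact s - 1\<rparr>"
  obtain s2 where A: "(case loc s i of
              Big \<Rightarrow> s2 = ?s1
            | WCh w k \<Rightarrow>
               (if load ?s1 (loc s i) = 0 then s2 = ?s1
                else if (\<exists>k'. k' \<noteq> k \<and> existing ?s1 (WCh w k') \<and> \<not> wfull ?s1 (WCh w k'))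
                then (\<exists>k' j. k' \<noteq> k \<and> existing ?s1 (WCh w k') \<and> \<not> wfull ?s1 (WCh w k') \<and>
                             j \<in> act ?s1 \<and> loc ?s1 j = WCh w k' \<and>
                             s2 = ?s1\<lparr>loc := (loc ?s1)(j := loc s i)\<rparr>)
                else s2 = ?s1))"
    and B: "(let T = 2 * clp2 (nact s2) in
            if T < tau s2 then
              s' = s2\<lparr>tau := T,
                      loc := (\<lambda>j. if j \<in> act s2 \<and> released T (loc s2 j) then Big else loc s2 j),
                      lastn := (\<lambda>j. if j \<in> act s2 \<and> released T (loc s2 j) then nact s2 else lastn s2 j)\<rparr>
            else s' = s2)"
    using assms unfolding depart_def Let_def by blast
  have C: "act s2 = act s - {i} \<and> nact s2 = nact s - 1 \<and> tau s2 = tau s \<and> lastn s2 = lastn s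
    \<and> (\<forall>j w k. loc s2 j = WCh w k \<longrightarrow> (\<exists>k'. loc s j = WCh w k'))
    \<and> (\<forall>j. loc s2 j = Big \<longrightarrow> loc s j = Big)"
  proof (cases "loc s i")
    case Big
    then show ?thesis using A by auto
  next
    case (WCh w k)
    have "s2 = ?s1 \<or> (\<exists>j k'. loc s j = WCh w k' \<and> s2 = ?s1\<lparr>loc := (loc s)(j := WCh w k)\<rparr>)"
    proof (cases "load ?s1 (loc s i) = 0")
      case True
      then show ?thesis using A WCh by simp
    next
      case F1: False
      show ?thesis
      proof (cases "\<exists>k'. k' \<noteq> k \<and> existing ?s1 (WCh w k') \<and> \<not> wfull ?s1 (WCh w k')")
        case True
        then have "\<exists>k' j. k' \<noteq> k \<and> existing ?s1 (WCh w k') \<and> \<not> wfull ?s1 (WCh w k') \<and>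
                             j \<in> act ?s1 \<and> loc ?s1 j = WCh w k' \<and>
                             s2 = ?s1\<lparr>loc := (loc ?s1)(j := loc s i)\<rparr>"
          using A WCh F1 by (simp only: chan.case if_False if_True)
        then show ?thesis using WCh by auto
      next
        case False
        then have "s2 = ?s1" using A WCh F1 by (simp only: chan.case if_False if_True)
        then show ?thesis by blast
      qed
    qed
    then show ?thesis by (auto split: if_splits)
  qed
  show ?thesis using B C by blast
qed

lemma step_inv:
  assumes "step lax s s'" "inv s"
  shows "inv s'"
proof -
  obtain i where "arrive lax i s s' \<or> depart lax i s s'" using assms(1) unfolding step_def by blast
  then show ?thesis
  proof
    assume ar: "arrive lax i s s'"
    let ?s1 = "s\<lparr>seen := insert i (seen s), nact := Suc (nact s)\<rparr>"
    let ?T = "2 * clp2 (nact ?s1)"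
    obtain s2 ch where A: "(if tau ?s1 < ?T then
              (\<exists>js. distinct js \<and>
                    set js = {j \<in> act ?s1. loc ?s1 j = Big \<and> lax j < ?T div 2} \<and>
                    realloc lax js (?s1\<lparr>tau := ?T\<rparr>) s2)
            else s2 = ?s1)"
      and B: "(if tau s2 \<le> lax i then ch = Big else choice s2 (lax i) ch)"
      and S: "s' = s2\<lparr>act := insert i (act s2), loc := (loc s2)(i := ch),
                         lastn := (lastn s2)(i := nact s2)\<rparr>"
      using ar unfolding arrive_def Let_def by blast
    have mono: "clp2 (nact s) \<le> clp2 (Suc (nact s))" by (rule clp2_mono) simp
    have Qs: "Q s" and ts: "tau s \<le> 2 * clp2 (nact s)" using assms(2) unfolding inv_def by auto
    have Q1: "Q ?s1" using Qs unfolding Q_def by simp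
    have s2: "Q s2 \<and> act s2 = act s \<and> nact s2 = Suc (nact s) \<and> tau s2 \<le> ?T"
    proof (cases "tau ?s1 < ?T")
      case True
      then obtain js where js: "set js = {j \<in> act ?s1. loc ?s1 j = Big \<and> lax j < ?T div 2}"
        "realloc lax js (?s1\<lparr>tau := ?T\<rparr>) s2" using A by auto
      have "\<forall>j\<in>set js. lax j < 2 * clp2 (nact (?s1\<lparr>tau := ?T\<rparr>))" using js(1) by auto
      moreover have "Q (?s1\<lparr>tau := ?T\<rparr>)" using Q1 unfolding Q_def by simp
      ultimately show ?thesis using realloc_pres[OF js(2)] by simp
    next
      case False
      then show ?thesis using A Q1 ts mono by simp
    qed
    have "Q s'"
    proof (cases "tau s2 \<le> lax i")
      case True
      then show ?thesis using B S s2 unfolding Q_def by auto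
    next
      case False
      then obtain k where "ch = WCh (lax i) k" using B choice_WCh[of s2 "lax i" ch] False by auto
      then show ?thesis using False S s2 unfolding Q_def by auto
    qed
    moreover have "tau s' \<le> 2 * clp2 (nact s')" using S s2 by simp
    ultimately show ?thesis unfolding inv_def by simp
  next
    assume dp: "depart lax i s s'"
    obtain s2 where D: "act s2 = act s - {i} \<and> nact s2 = nact s - 1 \<and> tau s2 = tau s \<and> lastn s2 = lastn s
    \<and> (\<forall>j w k. loc s2 j = WCh w k \<longrightarrow> (\<exists>k'. loc s j = WCh w k'))"
      and B: "(let T = 2 * clp2 (nact s2) in
            if T < tau s2 then
              s' = s2\<lparr>tau := T,
                      loc := (\<lambda>j. if j \<in> act s2 \<and> released T (loc s2 j) then Big else loc s2 j),
                      lastn := (\<lambda>j. if j \<in> act s2 \<and> released T (loc s2 j) then nact s2 else lastn s2 j)\<rparr>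
            else s' = s2)"
      using depart_facts[OF dp] by blast
    have Qs: "Q s" using assms(2) unfolding inv_def by auto
    have Q2: "Q s2" unfolding Q_def
    proof (intro ballI allI impI)
      fix j w k assume "j \<in> act s2" "loc s2 j = WCh w k"
      then obtain k' where "loc s j = WCh w k'" "j \<in> act s" using D by blast
      then show "w < 2 * clp2 (lastn s2 j)" using Qs D unfolding Q_def by auto
    qed
    show ?thesis
    proof (cases "2 * clp2 (nact s2) < tau s2")
      case True
      then show ?thesis using B Q2 unfolding Q_def inv_def Let_def by auto
    next
      case False
      then show ?thesis using B Q2 unfolding inv_def Let_def by auto
    qed
  qed
qed

lemma inv_reach: "(step lax)\<^sup>*\<^sup>* init s \<Longrightarrow> inv s"
proof (induction rule: rtranclp_induct)
  case base
  then show ?case unfolding inv_def Q_def init_def by (simp add: clp2_0)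
next
  case (step y z)
  then show ?case using step_inv by blast
qed

lemma arith_final:
  assumes "4 * clp2 n < w" "w < 2 * clp2 L"
  shows "2 * n \<le> L"
proof -
  obtain a where a: "clp2 n = 2 ^ a" using clp2_prop by blast
  obtain b where b: "clp2 L = 2 ^ b" using clp2_prop by blast
  have "2 ^ (a + 1) < (2::nat) ^ b" using assms a b by simp
  then have "a + 1 < b" using power_strict_increasing_iff[of "2::nat" "a+1" b] by linarith
  then have "(2::nat) ^ (a + 2) \<le> 2 ^ b" by (intro power_increasing) auto
  then have q: "4 * clp2 n \<le> clp2 L" using a b by simp
  have "2 * clp2 n \<le> L"
  proof (rule ccontr)
    assume "\<not> 2 * clp2 n \<le> L"
    then have "clp2 L \<le> 2 * clp2 n" using a by (intro clp2_le) (auto intro: exI[of _ "Suc a"])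
    moreover have "clp2 n \<ge> 1" using a by simp
    ultimately show False using q by simp
  qed
  then show ?thesis using clp2_prop[of n] by simp
qed

theorem lemma3:
  fixes lax :: "nat \<Rightarrow> nat" and s s' :: cra_state and i c :: nat
  assumes "\<forall>j. \<exists>k. lax j = 2 ^ k"
    and "(step lax)\<^sup>*\<^sup>* init s"
    and "depart lax i s s'"
    and "c \<in> act s'" and "loc s c \<noteq> Big" and "loc s' c = Big"
  shows "2 * nact s' \<le> lastn s c"
proof -
  have Qs: "Q s" using inv_reach[OF assms(2)] unfolding inv_def by simp
  obtain s2 where D: "act s2 = act s - {i} \<and> nact s2 = nact s - 1 \<and> tau s2 = tau s \<and> lastn s2 = lastn s
    \<and> (\<forall>j w k. loc s2 j = WCh w k \<longrightarrow> (\<exists>k'. loc s j = WCh w k'))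
    \<and> (\<forall>j. loc s2 j = Big \<longrightarrow> loc s j = Big)"
      and B: "(let T = 2 * clp2 (nact s2) in
            if T < tau s2 then
              s' = s2\<lparr>tau := T,
                      loc := (\<lambda>j. if j \<in> act s2 \<and> released T (loc s2 j) then Big else loc s2 j),
                      lastn := (\<lambda>j. if j \<in> act s2 \<and> released T (loc s2 j) then nact s2 else lastn s2 j)\<rparr>
            else s' = s2)"
    using depart_facts[OF assms(3)] by blast
  have nB: "loc s2 c \<noteq> Big" using D assms(5) by blast
  show ?thesis
  proof (cases "2 * clp2 (nact s2) < tau s2")
    case False
    then show ?thesis using B nB assms(6) by (simp add: Let_def)
  next
    case True
    let ?T = "2 * clp2 (nact s2)"
    have s': "s' = s2\<lparr>tau := ?T,
                      loc := (\<lambda>j. if j \<in> act s2 \<and> released ?T (loc s2 j) then Big else loc s2 j),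
                      lastn := (\<lambda>j. if j \<in> act s2 \<and> released ?T (loc s2 j) then nact s2 else lastn s2 j)\<rparr>"
      using B True by (simp add: Let_def)
    have cin: "c \<in> act s2" using assms(4) s' by simp
    have rel: "released ?T (loc s2 c)" using assms(6) s' nB cin by (auto split: if_splits)
    then obtain w k where wk: "loc s2 c = WCh w k" "2 * ?T < w"
      unfolding released_def by (auto split: chan.splits)
    obtain k' where "loc s c = WCh w k'" using D wk by blast
    moreover have "c \<in> act s" using cin D by blast
    ultimately have "w < 2 * clp2 (lastn s c)" using Qs unfolding Q_def by blast
    then have "2 * nact s2 \<le> lastn s c" using wk(2) by (intro arith_final[of _ w]) simp_all
    then show ?thesis using s' by simp
  qed
qed

end
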